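(* Consider any sequence of a total of $R$ operations, each of which is either an execution of the procedure $\textsc{Insert\_Rule}(r)$ or of the procedure $\textsc{Remove\_Rule}(r)$ (both described in the context), starting from the initial state. The worst-case time complexity of performing all of these operations is $O(RK\log M)$, where $K$ is the number of atoms and $M$ is the maximum number of overlapping rules per network switch (i.e. the maximum, over nodes $s$ and atoms $\alpha$, of the number of rules $r$ with $\mathrm{source}(r)=s$ whose interval contains $\alpha$).
   Context: Fix a positive integer $k$ and let $\mathsf{MIN}=0$, $\mathsf{MAX}=2^k$. A (forwarding) rule $r$ has: a half-closed interval $[\mathrm{lo}(r):\mathrm{hi}(r))$ of integers with $\mathsf{MIN}\le \mathrm{lo}(r)<\mathrm{hi}(r)\le\mathsf{MAX}$ (the interval corresponding to an IP prefix); a priority $\mathrm{priority}(r)$; and a directed edge $\mathrm{link}(r)$ of a fixed graph (the network topology), whose tail node is denoted $\mathrm{source}(r)$. Rules with the same source whose intervals overlap have pairwise distinct priorities. Atom representation: an ordered map $\mathfrak{M}$ (a balanced binary search tree with logarithmic-time insertion and lookup) from integers to atom identifiers, initialized to $\{\mathsf{MIN}\mapsto\alpha_0,\ \mathsf{MAX}\mapsto\alpha_\infty\}$; new identifiers are drawn from a counter increasing consecutively from $0$. For each key $n<\mathsf{MAX}$ with $n\mapsto\alpha$ in $\mathfrak{M}$, the atom $\alpha$ denotes the interval $[n:n')$ where $n'$ is the next larger key. For a rule $r$, $[\![r]\!]$ denotes the set of atoms whose intervals are contained in $[\mathrm{lo}(r):\mathrm{hi}(r))$. The procedure $\textsc{Create\_Atoms}^+(r)$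 inserts $\mathrm{lo}(r)$ and $\mathrm{hi}(r)$ into $\mathfrak{M}$ (each only if not already a key) with fresh identifiers, and returns the set $\Delta$ (of size at most 2) of delta-pairs $\alpha\mapsto\alpha'$, meaning that the interval previously denoted by the existing atom $\alpha$ is now split into $\alpha$ (lower part) and the new atom $\alpha'$ (upper part). Global state: $\mathit{label}[\ell]$, a set of atoms for each link $\ell$ (initially empty); $\mathit{owner}$, an array indexed by atoms where $\mathit{owner}[\alpha]$ is a hash table mapping a node $s$ to a balanced binary search tree $\mathit{owner}[\alpha][s]$ of the rules $r$ with $\mathrm{source}(r)=s$ and $\alpha\in[\![r]\!]$, ordered by priority (supporting insertion, removal, emptiness test and retrieval of the highest-priority rule). $\textsc{Insert\_Rule}(r)$: (1) $\Delta\gets\textsc{Create\_Atoms}^+(r)$; for each $\alpha\mapsto\alpha'$ in $\Delta$: set $\mathit{owner}[\alpha']\gets$ a copy of $\mathit{owner}[\alpha]$, and for each entry $s\mapsto \mathit{bst}$ in $\mathit{owner}[\alpha]$, let $r'$ be the highest-priority rule of $\mathit{bst}$ and add $\alpha'$ to $\mathit{label}[\mathrm{link}(r')]$. (2) For each $\alpha\in[\![r]\!]$: let $\mathit{bst}=\mathit{owner}[\alpha][\mathrm{source}(r)]$ and $r'$ its highest-priority rule (or none if empty); if there is no $r'$ or $\mathrm{priority}(r')<\mathrm{priority}(r)$, add $\alpha$ to $\mathit{label}[\mathrm{link}(r)]$ and, if $r'$ exists and $\mathrm{link}(r')\ne\mathrm{link}(r)$, remove $\alpha$ from $\mathit{label}[\mathrm{link}(r')]$;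 finally insert $r$ into $\mathit{bst}$. $\textsc{Remove\_Rule}(r)$: for each $\alpha\in[\![r]\!]$: let $\mathit{bst}=\mathit{owner}[\alpha][\mathrm{source}(r)]$, $r'$ its highest-priority rule; remove $r$ from $\mathit{bst}$; if $r'=r$, remove $\alpha$ from $\mathit{label}[\mathrm{link}(r)]$, and if $\mathit{bst}$ is now nonempty, add $\alpha$ to $\mathit{label}[\mathrm{link}(r'')]$ where $r''$ is the new highest-priority rule of $\mathit{bst}$. *)

theory Defs
  imports Complex_Main
begin

text \<open>A rule: half-closed interval [lo, hi), a priority and a link (a directed
edge, represented as a pair of nodes (tail, head)).\<close>

record 'v rule =
  lo :: nat
  hi :: nat
  prio :: int
  rlink :: "'v \<times> 'v"

definition source :: "'v rule \<Rightarrow> 'v" where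
  "source r = fst (rlink r)"

text \<open>Global state. amap is the ordered map from integers to atom identifiers,
cnt the identifier counter, label and owner as in the paper (owner alpha s is the
set of rules stored in the priority-ordered BST owner[alpha][s]; an absent hash
entry is represented by the empty set).  live is a ghost component recording the
set of currently installed rules (used only to state validity and M).\<close>

record 'v st =
  amap :: "nat \<rightharpoonup> nat"
  cnt :: nat
  label :: "'v \<times> 'v \<Rightarrow> nat set"
  owner :: "nat \<Rightarrow> 'v \<Rightarrow> 'v rule set"
  live :: "'v rule set"

text \<open>Initial state for MIN = 0, MAX = 2^k: alpha_0 = 0, alpha_infinity = 1.\<close>

definition init :: "nat \<Rightarrow> 'v st" where
  "init k = \<lparr> amap = [0 \<mapsto> 0, 2 ^ k \<mapsto> 1], cnt = 2, label = (\<lambda>_. {}),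
              owner = (\<lambda>_ _. {}), live = {} \<rparr>"

definition next_key :: "'v st \<Rightarrow> nat \<Rightarrow> nat" where
  "next_key s n = Min {m \<in> dom (amap s). n < m}"

definition pred_key :: "'v st \<Rightarrow> nat \<Rightarrow> nat" where
  "pred_key s n = Max {m \<in> dom (amap s). m < n}"

definition atom_keys :: "nat \<Rightarrow> 'v st \<Rightarrow> 'v rule \<Rightarrow> nat set" where
  "atom_keys k s r = {n \<in> dom (amap s). n < 2 ^ k \<and> lo r \<le> n \<and> next_key s n \<le> hi r}"

definition atom_list :: "nat \<Rightarrow> 'v st \<Rightarrow> 'v rule \<Rightarrow> nat list" where
  "atom_list k s r = map (\<lambda>n. the (amap s n)) (sorted_list_of_set (atom_keys k s r))"

definition atoms_of :: "nat \<Rightarrow> 'v st \<Rightarrow> 'v rule \<Rightarrow> nat set" where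
  "atoms_of k s r = (\<lambda>n. the (amap s n)) ` atom_keys k s r"

text \<open>One lookup / insertion / predecessor query in the balanced BST amap.\<close>
definition mapc :: "'v st \<Rightarrow> real" where
  "mapc s = 1 + log 2 (real (card (dom (amap s))))"

text \<open>One insertion / removal / max-retrieval in a balanced BST holding the set B.\<close>
definition bstc :: "'v rule set \<Rightarrow> real" where
  "bstc B = 1 + log 2 (real (card B) + 1)"

definition top :: "'v rule set \<Rightarrow> 'v rule" where
  "top B = (SOME r. r \<in> B \<and> (\<forall>r'\<in>B. prio r' \<le> prio r))"

definition entries :: "('v \<Rightarrow> 'v rule set) \<Rightarrow> 'v set" where
  "entries T = {s. T s \<noteq> {}}"

primrec run_steps :: "('a \<Rightarrow> 's \<Rightarrow> 's \<times> real) \<Rightarrow> 'a list \<Rightarrow> 's \<Rightarrow> 's \<times> real" where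
  "run_steps f [] s = (s, 0)"
| "run_steps f (x # xs) s =
     (let (s1, c1) = f x s; (s2, c2) = run_steps f xs s1 in (s2, c1 + c2))"

text \<open>Insert key n (if absent): lookup, predecessor query, insertion.\<close>
definition insert_key :: "'v st \<Rightarrow> nat \<Rightarrow> 'v st \<times> (nat \<times> nat) list \<times> real" where
  "insert_key s n =
     (if n \<in> dom (amap s) then (s, [], mapc s)
      else (let a = the (amap s (pred_key s n)); a' = cnt s in
             (s\<lparr> amap := (amap s)(n \<mapsto> a'), cnt := a' + 1 \<rparr>, [(a, a')], 3 * mapc s)))"

definition create_atoms :: "'v rule \<Rightarrow> 'v st \<Rightarrow> 'v st \<times> (nat \<times> nat) list \<times> real" where
  "create_atoms r s =
     (let (s1, d1, c1) = insert_key s (lo r); (s2, d2, c2) = insert_key s1 (hi r)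
      in (s2, d1 @ d2, c1 + c2))"

text \<open>Processing one delta pair: deep copy of the hash table owner[alpha]
(cost linear in its total size), and for each entry a max-retrieval and a label
insertion.\<close>
definition apply_delta :: "nat \<times> nat \<Rightarrow> 'v st \<Rightarrow> 'v st \<times> real" where
  "apply_delta d s =
     (let (a, a') = d; T = owner s a;
          lab = (\<lambda>l. if (\<exists>x \<in> entries T. rlink (top (T x)) = l)
                       then label s l \<union> {a'} else label s l);
          c = 1 + (\<Sum>x \<in> entries T. 1 + real (card (T x)) + bstc (T x) + 1)
      in (s\<lparr> owner := (owner s)(a' := T), label := lab \<rparr>, c))"

definition ins_atom :: "'v rule \<Rightarrow> nat \<Rightarrow> 'v st \<Rightarrow> 'v st \<times> real" where
  "ins_atom r a s =
     (let x = source r; B = owner s a x;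
          c = 1 + bstc B + 2 + bstc B;
          lab = (if B = {} \<or> prio (top B) < prio r then
                   (let L1 = (label s)(rlink r := label s (rlink r) \<union> {a}) in
                    if B \<noteq> {} \<and> rlink (top B) \<noteq> rlink r
                    then L1(rlink (top B) := L1 (rlink (top B)) - {a}) else L1)
                 else label s)
      in (s\<lparr> label := lab, owner := (owner s)(a := (owner s a)(x := B \<union> {r})) \<rparr>, c))"

text \<open>Enumerating [[r]] via a range query in amap.\<close>
definition enumc :: "nat \<Rightarrow> 'v st \<Rightarrow> 'v rule \<Rightarrow> real" where
  "enumc k s r = mapc s + real (length (atom_list k s r))"

definition insert_rule :: "nat \<Rightarrow> 'v rule \<Rightarrow> 'v st \<Rightarrow> 'v st \<times> real" where
  "insert_rule k r s =
     (let (s1, D, c1) = create_atoms r s;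
          (s2, c2) = run_steps apply_delta D s1;
          (s3, c3) = run_steps (ins_atom r) (atom_list k s2 r) s2
      in (s3\<lparr> live := live s3 \<union> {r} \<rparr>, c1 + c2 + enumc k s2 r + c3))"

definition rem_atom :: "'v rule \<Rightarrow> nat \<Rightarrow> 'v st \<Rightarrow> 'v st \<times> real" where
  "rem_atom r a s =
     (let x = source r; B = owner s a x; r' = top B; B' = B - {r};
          c = 1 + bstc B + bstc B + 2 + bstc B';
          lab = (if r' = r then
                   (let L1 = (label s)(rlink r := label s (rlink r) - {a}) in
                    if B' \<noteq> {} then L1(rlink (top B') := L1 (rlink (top B')) \<union> {a}) else L1)
                 else label s)
      in (s\<lparr> label := lab, owner := (owner s)(a := (owner s a)(x := B')) \<rparr>, c))"

definition remove_rule :: "nat \<Rightarrow> 'v rule \<Rightarrow> 'v st \<Rightarrow> 'v st \<times> real" where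
  "remove_rule k r s =
     (let (s1, c1) = run_steps (rem_atom r) (atom_list k s r) s
      in (s1\<lparr> live := live s1 - {r} \<rparr>, enumc k s r + c1))"

datatype 'v oper = Ins "'v rule" | Rem "'v rule"

definition exec_op :: "nat \<Rightarrow> 'v oper \<Rightarrow> 'v st \<Rightarrow> 'v st \<times> real" where
  "exec_op k p s = (case p of Ins r \<Rightarrow> insert_rule k r s | Rem r \<Rightarrow> remove_rule k r s)"

definition valid_op :: "nat \<Rightarrow> ('v \<times> 'v) set \<Rightarrow> 'v st \<Rightarrow> 'v oper \<Rightarrow> bool" where
  "valid_op k E s p = (case p of
      Ins r \<Rightarrow> lo r < hi r \<and> hi r \<le> 2 ^ k \<and> rlink r \<in> E \<and> r \<notin> live s \<and>
               (\<forall>r' \<in> live s. source r' = source r \<and> lo r' < hi r \<and> lo r < hi r'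
                     \<longrightarrow> prio r' \<noteq> prio r)
    | Rem r \<Rightarrow> r \<in> live s)"

primrec valid_seq :: "nat \<Rightarrow> ('v \<times> 'v) set \<Rightarrow> 'v oper list \<Rightarrow> 'v st \<Rightarrow> bool" where
  "valid_seq k E [] s = True"
| "valid_seq k E (p # os) s = (valid_op k E s p \<and> valid_seq k E os (fst (exec_op k p s)))"

primrec states :: "nat \<Rightarrow> 'v oper list \<Rightarrow> 'v st \<Rightarrow> 'v st list" where
  "states k [] s = [s]"
| "states k (p # os) s = s # states k os (fst (exec_op k p s))"

definition total_cost :: "nat \<Rightarrow> 'v oper list \<Rightarrow> real" where
  "total_cost k os = snd (run_steps (exec_op k) os (init k))"

definition final_state :: "nat \<Rightarrow> 'v oper list \<Rightarrow> 'v st" where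
  "final_state k os = fst (run_steps (exec_op k) os (init k))"

definition num_atoms :: "nat \<Rightarrow> 'v st \<Rightarrow> nat" where
  "num_atoms k s = card {n \<in> dom (amap s). n < 2 ^ k}"

definition overlap :: "nat \<Rightarrow> 'v st \<Rightarrow> nat" where
  "overlap k s = Max {card {r \<in> live s. source r = x \<and> a \<in> atoms_of k s r} | x a. True}"

definition max_overlap :: "nat \<Rightarrow> 'v oper list \<Rightarrow> nat" where
  "max_overlap k os = Max (overlap k ` set (states k os (init k)))"

end

theory Submission
  imports Defs
begin

lemma ins_atom_eq: "amap (fst (ins_atom r a t)) = amap t \<and> live (fst (ins_atom r a t)) = live t \<and> cnt (fst (ins_atom r a t)) = cnt t
  \<and> owner (fst (ins_atom r a t)) = (owner t)(a := (owner t a)(source r := owner t a (source r) \<union> {r}))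
  \<and> snd (ins_atom r a t) = 3 + 2 * bstc (owner t a (source r))"
  by (simp add: ins_atom_def Let_def)

lemma rem_atom_eq: "amap (fst (rem_atom r a t)) = amap t \<and> live (fst (rem_atom r a t)) = live t \<and> cnt (fst (rem_atom r a t)) = cnt t
  \<and> owner (fst (rem_atom r a t)) = (owner t)(a := (owner t a)(source r := owner t a (source r) - {r}))
  \<and> snd (rem_atom r a t) = 3 + 2 * bstc (owner t a (source r)) + bstc (owner t a (source r) - {r})"
  by (simp add: rem_atom_def Let_def)

lemma apply_delta_eq: "amap (fst (apply_delta (a,a') t)) = amap t \<and> live (fst (apply_delta (a,a') t)) = live t
  \<and> cnt (fst (apply_delta (a,a') t)) = cnt t
  \<and> owner (fst (apply_delta (a,a') t)) = (owner t)(a' := owner t a)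
  \<and> snd (apply_delta (a,a') t) = 1 + (\<Sum>x \<in> entries (owner t a). 1 + real (card (owner t a x)) + bstc (owner t a x) + 1)"
  by (simp add: apply_delta_def Let_def)

lemma run_steps_cons:
  "fst (run_steps f (x # xs) s) = fst (run_steps f xs (fst (f x s))) \<and>
   snd (run_steps f (x # xs) s) = snd (f x s) + snd (run_steps f xs (fst (f x s)))"
  by (auto split: prod.splits)

lemma run_steps_append:
  "fst (run_steps f (xs @ ys) s) = fst (run_steps f ys (fst (run_steps f xs s))) \<and>
   snd (run_steps f (xs @ ys) s) = snd (run_steps f xs s) + snd (run_steps f ys (fst (run_steps f xs s)))"
proof (induction xs arbitrary: s)
  case Nil then show ?case by simp
next
  case (Cons x xs)
  show ?case using Cons.IH[of "fst (f x s)"] run_steps_cons[of f x "xs @ ys" s] run_steps_cons[of f x xs s]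
    by simp
qed

definition nk :: "(nat \<rightharpoonup> nat) \<Rightarrow> nat \<Rightarrow> nat" where
  "nk m n = Min {q \<in> dom m. n < q}"

definition cov :: "(nat \<rightharpoonup> nat) \<Rightarrow> 'v rule \<Rightarrow> nat \<Rightarrow> bool" where
  "cov m r n \<longleftrightarrow> lo r \<le> n \<and> nk m n \<le> hi r"

lemma nk_in: "finite (dom m) \<Longrightarrow> q \<in> dom m \<Longrightarrow> n < q \<Longrightarrow> nk m n \<in> dom m \<and> n < nk m n"
proof -
  assume a: "finite (dom m)" "q \<in> dom m" "n < q"
  have "nk m n \<in> {q \<in> dom m. n < q}" unfolding nk_def by (rule Min_in) (use a in auto)
  then show ?thesis by auto
qed

lemma nk_le: "finite (dom m) \<Longrightarrow> q \<in> dom m \<Longrightarrow> n < q \<Longrightarrow> nk m n \<le> q"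
  unfolding nk_def by (rule Min_le) auto

lemma nk_mono: "finite (dom m') \<Longrightarrow> dom m \<subseteq> dom m' \<Longrightarrow> finite (dom m) \<Longrightarrow> q \<in> dom m \<Longrightarrow> n < q \<Longrightarrow> nk m' n \<le> nk m n"
  using nk_in[of m q n] nk_le[of m' "nk m n" n] by auto

lemma cov_mono: "finite (dom m') \<Longrightarrow> dom m \<subseteq> dom m' \<Longrightarrow> finite (dom m) \<Longrightarrow> q \<in> dom m \<Longrightarrow> n < q \<Longrightarrow> cov m r n \<Longrightarrow> cov m' r n"
  unfolding cov_def using nk_mono[of m' m q n] by auto

lemma atom_keys_eq: "atom_keys k s r = {n \<in> dom (amap s). n < 2 ^ k \<and> cov (amap s) r n}"
  unfolding atom_keys_def cov_def nk_def next_key_def by simp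

definition Wf :: "nat \<Rightarrow> (nat \<rightharpoonup> nat) \<Rightarrow> nat \<Rightarrow> bool" where
  "Wf k m c \<longleftrightarrow> dom m \<subseteq> {..2^k} \<and> 0 \<in> dom m \<and> 2^k \<in> dom m \<and> (\<forall>n\<in>dom m. the (m n) < c)
     \<and> inj_on (\<lambda>n. the (m n)) (dom m)"

definition Iown :: "nat \<Rightarrow> (nat \<rightharpoonup> nat) \<Rightarrow> (nat \<Rightarrow> 'v \<Rightarrow> 'v rule set) \<Rightarrow> 'v rule set \<Rightarrow> bool" where
  "Iown k m Ow L \<longleftrightarrow> (\<forall>n\<in>dom m. n < 2^k \<longrightarrow> (\<forall>x. Ow (the (m n)) x \<subseteq> {r \<in> L. source r = x \<and> cov m r n}))"

lemma Wf_finite: "Wf k m c \<Longrightarrow> finite (dom m)"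
  unfolding Wf_def using finite_subset by blast

lemma pred_facts:
  assumes W: "Wf k m c" and n: "n \<le> 2^k" "n \<notin> dom m"
  defines "p \<equiv> Max {q \<in> dom m. q < n}"
  shows "p \<in> dom m \<and> p < n \<and> n < 2^k \<and> n < nk m p \<and> (\<forall>q\<in>dom m. q < n \<longrightarrow> q \<le> p)"
proof -
  have fin: "finite (dom m)" using W by (rule Wf_finite)
  have z: "0 \<in> dom m" "2^k \<in> dom m" using W unfolding Wf_def by auto
  have n0: "0 < n" using z n by (cases n) auto
  have nk2: "n < 2^k" using z n by (cases "n = 2^k") auto
  have ne: "{q \<in> dom m. q < n} \<noteq> {}" using z n0 by auto
  have pin: "p \<in> {q \<in> dom m. q < n}" unfolding p_def by (rule Max_in) (use fin ne in auto)
  have pmax: "\<forall>q\<in>dom m. q < n \<longrightarrow> q \<le> p" unfolding p_def using fin by (auto intro: Max_ge)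
  have "p < 2^k" using pin nk2 by auto
  then have nkp: "nk m p \<in> dom m \<and> p < nk m p" using nk_in[OF fin z(2)] by auto
  have "n < nk m p"
  proof (rule ccontr)
    assume "\<not> n < nk m p"
    moreover have "nk m p \<noteq> n" using nkp n by auto
    ultimately have "nk m p < n" by auto
    then have "nk m p \<le> p" using pmax nkp by auto
    then show False using nkp by auto
  qed
  then show ?thesis using pin pmax nk2 by auto
qed

lemma insert_new_Wf_Iown:
  assumes W: "Wf k m c" and n: "n \<le> 2^k" "n \<notin> dom m"
    and I: "Iown k m Ow L"
  defines "p \<equiv> Max {q \<in> dom m. q < n}"
  shows "Wf k (m(n \<mapsto> c)) (c + 1) \<and> Iown k (m(n \<mapsto> c)) (Ow(c := Ow (the (m p)))) L"
proof -
  have fin: "finite (dom m)" using W by (rule Wf_finite)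
  have PF: "p \<in> dom m \<and> p < n \<and> n < 2^k \<and> n < nk m p \<and> (\<forall>q\<in>dom m. q < n \<longrightarrow> q \<le> p)"
    using pred_facts[OF W n] unfolding p_def by blast
  have z: "0 \<in> dom m" "2^k \<in> dom m" "dom m \<subseteq> {..2^k}" "\<forall>q\<in>dom m. the (m q) < c"
     "inj_on (\<lambda>q. the (m q)) (dom m)" using W unfolding Wf_def by auto
  let ?m = "m(n \<mapsto> c)"
  have fin': "finite (dom ?m)" using fin by simp
  have W': "Wf k ?m (c + 1)"
    unfolding Wf_def
  proof (intro conjI)
    show "dom ?m \<subseteq> {..2^k}" using z n by auto
    show "0 \<in> dom ?m" "2^k \<in> dom ?m" using z by auto
    show "\<forall>q\<in>dom ?m. the (?m q) < c + 1" using z(4) by (auto simp: less_SucI)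
    show "inj_on (\<lambda>q. the (?m q)) (dom ?m)"
      using z(4,5) n(2) unfolding inj_on_def by (auto split: if_splits)
  qed
  have I': "Iown k ?m (Ow(c := Ow (the (m p)))) L"
    unfolding Iown_def
  proof (intro ballI impI allI)
    fix q x assume q: "q \<in> dom ?m" "q < 2^k"
    show "(Ow(c := Ow (the (m p)))) (the (?m q)) x \<subseteq> {r \<in> L. source r = x \<and> cov ?m r q}"
    proof (cases "q = n")
      case True
      have "Ow (the (m p)) x \<subseteq> {r \<in> L. source r = x \<and> cov m r p}"
        using I PF q unfolding Iown_def by auto
      moreover have "cov m r p \<Longrightarrow> cov ?m r n" for r :: "'a rule"
      proof -
        assume "cov m r p"
        moreover have "nk ?m n \<le> nk m p"
          using nk_le[OF fin', of "nk m p" n] nk_in[OF fin z(2), of p] PF by auto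
        ultimately show "cov ?m r n" unfolding cov_def using PF by auto
      qed
      ultimately show ?thesis using True by auto
    next
      case False
      then have qd: "q \<in> dom m" using q by auto
      then have "the (m q) \<noteq> c" using z by auto
      then have e: "(Ow(c := Ow (the (m p)))) (the (?m q)) x = Ow (the (m q)) x" using False by simp
      have "Ow (the (m q)) x \<subseteq> {r \<in> L. source r = x \<and> cov m r q}"
        using I qd q unfolding Iown_def by auto
      moreover have "cov m r q \<Longrightarrow> cov ?m r q" for r :: "'a rule"
        using cov_mono[OF fin' _ fin z(2) q(2)] by auto
      ultimately show ?thesis using e by auto
    qed
  qed
  show ?thesis using W' I' by blast
qed

lemma log_card_le: "(c::nat) \<le> M \<Longrightarrow> log 2 (real c + 1) \<le> log 2 (real M + 1)"
  by (rule log_mono) auto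

lemma bstc_le: "card B \<le> M \<Longrightarrow> bstc B \<le> 1 + log 2 (real M + 1)"
  unfolding bstc_def using log_card_le[of "card B" M] by linarith

lemma dcost:
  fixes t :: "'v st" and L :: "'v rule set"
  assumes fin: "finite L" and cL: "card L \<le> N"
    and sub: "\<forall>x. owner t a x \<subseteq> {r \<in> L. source r = x}"
    and cM: "\<forall>x. card (owner t a x) \<le> Mx"
  shows "snd (apply_delta (a,a') t) \<le> 1 + real N * (4 + log 2 (real Mx + 1))"
proof -
  let ?T = "owner t a"
  let ?E = "entries ?T"
  have Esub: "?E \<subseteq> source ` L"
  proof
    fix x assume "x \<in> ?E"
    then obtain r where "r \<in> ?T x" unfolding entries_def by auto
    then show "x \<in> source ` L" using sub by blast
  qed
  have finE: "finite ?E" using Esub fin finite_subset by blast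
  have "card ?E \<le> card (source ` L)" by (rule card_mono) (use fin Esub in auto)
  also have "\<dots> \<le> card L" by (rule card_image_le[OF fin])
  finally have cE: "card ?E \<le> N" using cL by linarith
  have finT: "finite (?T x)" for x by (rule finite_subset[of _ L]) (use sub fin in auto)
  have "(\<Sum>x\<in>?E. card (?T x)) = card (\<Union>x\<in>?E. ?T x)"
  proof (rule card_UN_disjoint[symmetric])
    show "finite ?E" by (rule finE)
    show "\<forall>x\<in>?E. finite (?T x)" using finT by simp
    show "\<forall>x\<in>?E. \<forall>j\<in>?E. x \<noteq> j \<longrightarrow> ?T x \<inter> ?T j = {}"
    proof (intro ballI impI)
      fix x j :: 'v assume "x \<noteq> j"
      have "?T x \<subseteq> {r. source r = x}" "?T j \<subseteq> {r. source r = j}" using sub by blast+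
      then show "?T x \<inter> ?T j = {}" using \<open>x \<noteq> j\<close> by blast
    qed
  qed
  also have "\<dots> \<le> card L" by (rule card_mono[OF fin]) (use sub in auto)
  finally have s0: "(\<Sum>x\<in>?E. card (?T x)) \<le> N" using cL by linarith
  have s1: "(\<Sum>x\<in>?E. real (card (?T x))) \<le> real N"
  proof -
    have "(\<Sum>x\<in>?E. real (card (?T x))) = real (\<Sum>x\<in>?E. card (?T x))" by simp
    then show ?thesis using s0 by linarith
  qed
  have s2: "(\<Sum>x\<in>?E. 3 + log 2 (real (card (?T x)) + 1)) \<le> real (card ?E) * (3 + log 2 (real Mx + 1))"
  proof (rule sum_bounded_above)
    fix x assume "x \<in> ?E"
    show "3 + log 2 (real (card (?T x)) + 1) \<le> 3 + log 2 (real Mx + 1)"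
      using log_card_le[of "card (?T x)" Mx, OF cM[rule_format]] by linarith
  qed
  have s3: "real (card ?E) * (3 + log 2 (real Mx + 1)) \<le> real N * (3 + log 2 (real Mx + 1))"
    by (rule mult_right_mono) (use cE in auto)
  have eq: "1 + real (card (?T x)) + bstc (?T x) + 1 = real (card (?T x)) + (3 + log 2 (real (card (?T x)) + 1))" for x
    by (simp add: bstc_def)
  have "snd (apply_delta (a,a') t) = 1 + (\<Sum>x\<in>?E. 1 + real (card (?T x)) + bstc (?T x) + 1)"
    using apply_delta_eq by blast
  also have "\<dots> = 1 + (\<Sum>x\<in>?E. real (card (?T x)) + (3 + log 2 (real (card (?T x)) + 1)))"
    by (rule arg_cong[where f="\<lambda>z. 1 + z"], rule sum.cong, simp, rule eq)
  also have "\<dots> = 1 + (\<Sum>x\<in>?E. real (card (?T x))) + (\<Sum>x\<in>?E. 3 + log 2 (real (card (?T x)) + 1))"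
    by (simp add: sum.distrib)
  also have "\<dots> \<le> 1 + real N * (4 + log 2 (real Mx + 1))"
  proof -
    have "real N * (4 + log 2 (real Mx + 1)) = real N + real N * (3 + log 2 (real Mx + 1))"
      by (simp add: algebra_simps)
    then show ?thesis using s1 s2 s3 by linarith
  qed
  finally show ?thesis .
qed

lemma ins_run:
  fixes t :: "'v st"
  assumes "\<forall>a\<in>set La. finite (owner t a (source r)) \<and> card (owner t a (source r) \<union> {r}) \<le> Mx"
  shows "amap (fst (run_steps (ins_atom r) La t)) = amap t \<and> live (fst (run_steps (ins_atom r) La t)) = live t
    \<and> cnt (fst (run_steps (ins_atom r) La t)) = cnt t
    \<and> owner (fst (run_steps (ins_atom r) La t)) = (\<lambda>a x. if a \<in> set La \<and> x = source r then owner t a x \<union> {r} else owner t a x)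
    \<and> snd (run_steps (ins_atom r) La t) \<le> real (length La) * (5 + 2 * log 2 (real Mx + 1))"
  using assms
proof (induction La arbitrary: t)
  case Nil then show ?case by simp
next
  case (Cons a La)
  let ?t = "fst (ins_atom r a t)"
  have E: "amap ?t = amap t" "live ?t = live t" "cnt ?t = cnt t"
    "owner ?t = (owner t)(a := (owner t a)(source r := owner t a (source r) \<union> {r}))"
    "snd (ins_atom r a t) = 3 + 2 * bstc (owner t a (source r))"
    using ins_atom_eq[of r a t] by auto
  have H: "\<forall>b\<in>set La. finite (owner ?t b (source r)) \<and> card (owner ?t b (source r) \<union> {r}) \<le> Mx"
    using Cons.prems E(4) by auto
  note IH = Cons.IH[OF H]
  have fa: "finite (owner t a (source r))" "card (owner t a (source r) \<union> {r}) \<le> Mx" using Cons.prems by auto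
  have "card (owner t a (source r)) \<le> Mx"
    using card_mono[of "owner t a (source r) \<union> {r}" "owner t a (source r)"] fa by force
  then have c1: "snd (ins_atom r a t) \<le> 5 + 2 * log 2 (real Mx + 1)" using E(5) bstc_le by fastforce
  have RC: "fst (run_steps (ins_atom r) (a # La) t) = fst (run_steps (ins_atom r) La ?t)"
    "snd (run_steps (ins_atom r) (a # La) t) = snd (ins_atom r a t) + snd (run_steps (ins_atom r) La ?t)"
    using run_steps_cons[of "ins_atom r" a La t] by simp_all
  have ow: "owner (fst (run_steps (ins_atom r) (a # La) t)) = (\<lambda>b x. if b \<in> set (a # La) \<and> x = source r then owner t b x \<union> {r} else owner t b x)"
    using IH RC E(4) by (auto simp: fun_eq_iff)
  show ?case using IH RC E ow c1 by (simp add: algebra_simps)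
qed

lemma rem_run:
  fixes t :: "'v st"
  assumes "\<forall>a\<in>set La. finite (owner t a (source r)) \<and> card (owner t a (source r)) \<le> Mx"
  shows "amap (fst (run_steps (rem_atom r) La t)) = amap t \<and> live (fst (run_steps (rem_atom r) La t)) = live t
    \<and> cnt (fst (run_steps (rem_atom r) La t)) = cnt t
    \<and> owner (fst (run_steps (rem_atom r) La t)) = (\<lambda>a x. if a \<in> set La \<and> x = source r then owner t a x - {r} else owner t a x)
    \<and> snd (run_steps (rem_atom r) La t) \<le> real (length La) * (6 + 3 * log 2 (real Mx + 1))"
  using assms
proof (induction La arbitrary: t)
  case Nil then show ?case by simp
next
  case (Cons a La)
  let ?t = "fst (rem_atom r a t)"
  have E: "amap ?t = amap t" "live ?t = live t" "cnt ?t = cnt t"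
    "owner ?t = (owner t)(a := (owner t a)(source r := owner t a (source r) - {r}))"
    "snd (rem_atom r a t) = 3 + 2 * bstc (owner t a (source r)) + bstc (owner t a (source r) - {r})"
    using rem_atom_eq[of r a t] by auto
  have H: "\<forall>b\<in>set La. finite (owner ?t b (source r)) \<and> card (owner ?t b (source r)) \<le> Mx"
    using Cons.prems E(4) by (auto intro: le_trans[OF card_Diff1_le])
  note IH = Cons.IH[OF H]
  have fa: "finite (owner t a (source r))" "card (owner t a (source r)) \<le> Mx" using Cons.prems by auto
  have "card (owner t a (source r) - {r}) \<le> Mx"
    using card_Diff1_le[of "owner t a (source r)" r] fa by auto
  then have c1: "snd (rem_atom r a t) \<le> 6 + 3 * log 2 (real Mx + 1)"
    using E(5) bstc_le[OF fa(2)] bstc_le[of "owner t a (source r) - {r}" Mx] by linarith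
  have RC: "fst (run_steps (rem_atom r) (a # La) t) = fst (run_steps (rem_atom r) La ?t)"
    "snd (run_steps (rem_atom r) (a # La) t) = snd (rem_atom r a t) + snd (run_steps (rem_atom r) La ?t)"
    using run_steps_cons[of "rem_atom r" a La t] by simp_all
  have ow: "owner (fst (run_steps (rem_atom r) (a # La) t)) = (\<lambda>b x. if b \<in> set (a # La) \<and> x = source r then owner t b x - {r} else owner t b x)"
    using IH RC E(4) by (auto simp: fun_eq_iff)
  show ?case using IH RC E ow c1 by (simp add: algebra_simps)
qed

definition dfold :: "(nat \<times> nat) list \<Rightarrow> (nat \<Rightarrow> 'v \<Rightarrow> 'v rule set) \<Rightarrow> (nat \<Rightarrow> 'v \<Rightarrow> 'v rule set)" where
  "dfold d Ow = foldl (\<lambda>O' (a, a'). O'(a' := O' a)) Ow d"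

lemma delta_run:
  "amap (fst (run_steps apply_delta d t)) = amap t \<and> live (fst (run_steps apply_delta d t)) = live t
   \<and> cnt (fst (run_steps apply_delta d t)) = cnt t \<and> owner (fst (run_steps apply_delta d t)) = dfold d (owner t)"
proof (induction d arbitrary: t)
  case Nil then show ?case by (simp add: dfold_def)
next
  case (Cons ad d)
  obtain a a' where ad: "ad = (a, a')" by fastforce
  show ?case using Cons.IH[of "fst (apply_delta (a,a') t)"] run_steps_cons[of apply_delta ad d t]
      apply_delta_eq[of a a' t] ad by (simp add: dfold_def fun_upd_def)
qed

lemma dfold_append: "dfold (d1 @ d2) Ow = dfold d2 (dfold d1 Ow)"
  by (simp add: dfold_def)

lemma mapc_nonneg: "card (dom (amap s)) \<ge> 1 \<Longrightarrow> mapc s \<ge> 1"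
  unfolding mapc_def by simp

lemma key_step:
  assumes W: "Wf k (amap s) (cnt s)" and n: "n \<le> 2^k" and e: "insert_key s n = (s', d, c)"
  shows "Wf k (amap s') (cnt s') \<and> owner s' = owner s \<and> live s' = live s \<and> amap s \<subseteq>\<^sub>m amap s'
    \<and> card (dom (amap s')) = card (dom (amap s)) + length d \<and> length d \<le> 1 \<and> c \<le> 3 * mapc s
    \<and> (\<forall>Ow L. Iown k (amap s) Ow L \<longrightarrow> Iown k (amap s') (dfold d Ow) L)
    \<and> (\<forall>ad\<in>set d. \<exists>p\<in>dom (amap s). p < 2^k \<and> fst ad = the (amap s p))"
proof (cases "n \<in> dom (amap s)")
  case True
  have z: "0 \<in> dom (amap s)" using W unfolding Wf_def by auto
  have "card (dom (amap s)) \<ge> 1" using Wf_finite[OF W] z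
    by (metis One_nat_def Suc_leI card_gt_0_iff empty_iff)
  then have "mapc s \<ge> 1" by (rule mapc_nonneg)
  then show ?thesis using True e W by (auto simp: insert_key_def dfold_def)
next
  case False
  let ?m = "amap s"
  define p where "p = Max {q \<in> dom ?m. q < n}"
  have PF: "p \<in> dom ?m \<and> p < n \<and> n < 2^k \<and> n < nk ?m p \<and> (\<forall>q\<in>dom ?m. q < n \<longrightarrow> q \<le> p)"
    using pred_facts[OF W n False] unfolding p_def by blast
  have pk: "pred_key s n = p" unfolding pred_key_def p_def by simp
  have ee: "s' = s\<lparr> amap := ?m(n \<mapsto> cnt s), cnt := cnt s + 1 \<rparr>" "d = [(the (?m p), cnt s)]" "c = 3 * mapc s"
    using e False pk by (auto simp: insert_key_def Let_def)
  have WI: "Wf k (?m(n \<mapsto> cnt s)) (cnt s + 1)" using insert_new_Wf_Iown[OF W n False, of "\<lambda>_ _. {}" "{}"] by (simp add: Iown_def)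
  have II: "\<forall>Ow L. Iown k ?m Ow L \<longrightarrow> Iown k (amap s') (dfold d Ow) L"
    using insert_new_Wf_Iown[OF W n False] ee unfolding p_def by (simp add: dfold_def) blast
  have ml: "?m \<subseteq>\<^sub>m ?m(n \<mapsto> cnt s)" using False by (auto simp: map_le_def)
  have cd: "card (dom (?m(n \<mapsto> cnt s))) = card (dom ?m) + 1"
    using False Wf_finite[OF W] by simp
  have ex: "\<exists>q\<in>dom ?m. q < 2^k \<and> the (?m p) = the (?m q)" by (rule bexI[of _ p]) (use PF in auto)
  show ?thesis using ee WI II ml cd PF ex by auto
qed

definition Inv :: "nat \<Rightarrow> 'v st \<Rightarrow> bool" where
  "Inv k s \<longleftrightarrow> Wf k (amap s) (cnt s) \<and> finite (live s) \<and> Iown k (amap s) (owner s) (live s)"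

lemma overlap_ge:
  assumes "finite (live t)"
  shows "card {r \<in> live t. source r = x \<and> a \<in> atoms_of k t r} \<le> overlap k t"
proof -
  let ?S = "{card {r \<in> live t. source r = x \<and> a \<in> atoms_of k t r} | x a. True}"
  have "?S \<subseteq> {..card (live t)}" using assms by (auto intro: card_mono)
  then have "finite ?S" using finite_subset by blast
  then show ?thesis unfolding overlap_def by (rule Max_ge) blast
qed

lemma card_cov_le:
  assumes fin: "finite (live t)" and L: "L \<subseteq> live t" and n: "n \<in> dom (amap t)" "n < 2^k"
  shows "card {r \<in> L. source r = x \<and> cov (amap t) r n} \<le> overlap k t"
proof -
  have "{r \<in> L. source r = x \<and> cov (amap t) r n} \<subseteq> {r \<in> live t. source r = x \<and> the (amap t n) \<in> atoms_of k t r}"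
    using L n unfolding atoms_of_def atom_keys_eq by auto
  then have "card {r \<in> L. source r = x \<and> cov (amap t) r n} \<le> card {r \<in> live t. source r = x \<and> the (amap t n) \<in> atoms_of k t r}"
    by (rule card_mono[rotated]) (use fin in auto)
  also have "\<dots> \<le> overlap k t" by (rule overlap_ge[OF fin])
  finally show ?thesis .
qed

lemma num_atoms_eq: "Wf k (amap s) c \<Longrightarrow> num_atoms k s = card (dom (amap s)) - 1"
proof -
  assume W: "Wf k (amap s) c"
  have "{n \<in> dom (amap s). n < 2 ^ k} = dom (amap s) - {2^k}" using W unfolding Wf_def by fastforce
  then show ?thesis unfolding num_atoms_def using W Wf_finite[OF W] unfolding Wf_def by simp
qed

lemma card_dom_ge: "Wf k m c \<Longrightarrow> card (dom m) \<ge> 1"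
proof -
  assume W: "Wf k m c"
  then have "0 \<in> dom m" unfolding Wf_def by auto
  then show ?thesis using Wf_finite[OF W] by (metis One_nat_def Suc_leI card_gt_0_iff empty_iff)
qed

lemma pow_ge: "Suc K \<le> 2 ^ K"
  by (induction K) auto

lemma log_le_self: "log 2 (real K + 1) \<le> real K"
proof -
  have "real K + 1 \<le> 2 powr real K"
    using pow_ge[of K] by (simp add: powr_realpow) (metis of_nat_Suc of_nat_le_iff of_nat_numeral of_nat_power add.commute)
  then have "log 2 (real K + 1) \<le> log 2 (2 powr real K)" by (intro log_mono) auto
  then show ?thesis by simp
qed

lemma mapc_le: "card (dom (amap s)) \<le> K + 1 \<Longrightarrow> card (dom (amap s)) \<ge> 1 \<Longrightarrow> mapc s \<le> 1 + real K"
proof -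
  assume a: "card (dom (amap s)) \<le> K + 1" "card (dom (amap s)) \<ge> 1"
  have "log 2 (real (card (dom (amap s)))) \<le> log 2 (real K + 1)" by (rule log_mono) (use a in auto)
  then show ?thesis unfolding mapc_def using log_le_self[of K] by linarith
qed

lemma logM: "log 2 (real M + 1) \<le> 1 + log 2 (real M) \<and> 1 \<le> 1 + log 2 (real M)"
proof (cases "M = 0")
  case True then show ?thesis by (simp add: log_def)
next
  case False
  then have M1: "real M \<ge> 1" by simp
  have "log 2 (real M + 1) \<le> log 2 (2 * real M)" by (rule log_mono) (use M1 in auto)
  also have "\<dots> = 1 + log 2 (real M)" using M1 by (simp add: log_mult)
  finally show ?thesis using M1 by simp
qed

lemma Iown_lift:
  assumes I: "Iown k m Ow L" and p: "p \<in> dom m" "p < 2^k" and sub: "dom m \<subseteq> dom m2"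
    and f2: "finite (dom m2)" and f1: "finite (dom m)" and top: "2^k \<in> dom m"
  shows "Ow (the (m p)) x \<subseteq> {r \<in> L. source r = x \<and> cov m2 r p}"
  using I p cov_mono[OF f2 sub f1 top p(2)] unfolding Iown_def by blast

lemma delta1:
  fixes t :: "'v st" and L :: "'v rule set"
  assumes "length d \<le> 1" and fin: "finite L" and cL: "card L \<le> N"
    and H: "\<forall>ad\<in>set d. \<forall>x. owner t (fst ad) x \<subseteq> {r \<in> L. source r = x} \<and> card (owner t (fst ad) x) \<le> Mx"
  shows "snd (run_steps apply_delta d t) \<le> real (length d) * (1 + real N * (4 + log 2 (real Mx + 1)))"
proof (cases d)
  case Nil then show ?thesis by simp
next
  case (Cons ad d')
  then have d: "d = [ad]" using assms(1) by simp
  obtain a a' where ad: "ad = (a, a')" by fastforce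
  have "snd (apply_delta (a,a') t) \<le> 1 + real N * (4 + log 2 (real Mx + 1))"
    by (rule dcost[OF fin cL]) (use H d ad in auto)
  moreover have "snd (run_steps apply_delta d t) = snd (apply_delta (a,a') t)"
    using d ad run_steps_cons[of apply_delta ad "[]" t] by simp
  ultimately show ?thesis using d by simp
qed

lemma owner_bound:
  fixes t :: "'v st" and Ow :: "nat \<Rightarrow> 'v \<Rightarrow> 'v rule set"
  assumes I: "Iown k m Ow L" and W: "Wf k m c" and sub: "dom m \<subseteq> dom (amap t)" and f2: "finite (dom (amap t))"
    and p: "p \<in> dom m" "p < 2^k" and fin: "finite (live t)" and L: "L \<subseteq> live t"
  shows "\<forall>x. Ow (the (m p)) x \<subseteq> {r \<in> L. source r = x} \<and> card (Ow (the (m p)) x) \<le> overlap k t"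
proof
  fix x
  have top: "2^k \<in> dom m" using W unfolding Wf_def by auto
  have S: "Ow (the (m p)) x \<subseteq> {r \<in> L. source r = x \<and> cov (amap t) r p}"
    by (rule Iown_lift[OF I p sub f2 Wf_finite[OF W] top])
  have "card (Ow (the (m p)) x) \<le> card {r \<in> L. source r = x \<and> cov (amap t) r p}"
  proof (rule card_mono[OF _ S])
    have "finite L" by (rule finite_subset[OF L fin])
    then show "finite {r \<in> L. source r = x \<and> cov (amap t) r p}" by simp
  qed
  also have "\<dots> \<le> overlap k t" by (rule card_cov_le[OF fin L]) (use sub p in auto)
  finally show "Ow (the (m p)) x \<subseteq> {r \<in> L. source r = x} \<and> card (Ow (the (m p)) x) \<le> overlap k t"
    using S by auto
qed

lemma atom_list_facts:
  assumes W: "Wf k (amap t) c"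
  shows "set (atom_list k t r) = (\<lambda>n. the (amap t n)) ` atom_keys k t r
    \<and> length (atom_list k t r) \<le> num_atoms k t"
proof -
  have sub: "atom_keys k t r \<subseteq> {n \<in> dom (amap t). n < 2 ^ k}" unfolding atom_keys_def by auto
  have fin: "finite {n \<in> dom (amap t). n < 2 ^ k}" using Wf_finite[OF W] by simp
  have fa: "finite (atom_keys k t r)" using finite_subset[OF sub fin] .
  have "length (atom_list k t r) = card (atom_keys k t r)" unfolding atom_list_def using fa by simp
  also have "\<dots> \<le> num_atoms k t" unfolding num_atoms_def by (rule card_mono[OF fin sub])
  finally show ?thesis unfolding atom_list_def using fa by simp
qed

lemma aux22:
  fixes K P X :: real
  assumes "K \<le> P" "1 \<le> K"
  shows "6*(1+K) + X + (1+2*K) + (5*K + 2*P) \<le> 22 * P + X"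
  using assms by (simp add: algebra_simps)

lemma insert_step:
  fixes s :: "'v st"
  assumes Iv: "Inv k s" and r: "lo r < hi r" "hi r \<le> 2^k" and cN: "card (live s) \<le> N"
    and oM: "overlap k (fst (insert_rule k r s)) \<le> M"
    and kf: "num_atoms k (fst (insert_rule k r s)) \<le> Kf"
  shows "Inv k (fst (insert_rule k r s)) \<and> live (fst (insert_rule k r s)) = live s \<union> {r}
     \<and> num_atoms k s \<le> num_atoms k (fst (insert_rule k r s))
     \<and> snd (insert_rule k r s) \<le> 22 * real Kf * (1 + log 2 (real M))
         + (real (num_atoms k (fst (insert_rule k r s))) - real (num_atoms k s)) * (1 + 5 * real N * (1 + log 2 (real M)))"
proof -
  from Iv have W0: "Wf k (amap s) (cnt s)" and finL: "finite (live s)" and I0: "Iown k (amap s) (owner s) (live s)"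
    unfolding Inv_def by auto
  obtain s1a d1 c1 where e1: "insert_key s (lo r) = (s1a, d1, c1)" by (metis prod_cases3)
  have K1: "Wf k (amap s1a) (cnt s1a) \<and> owner s1a = owner s \<and> live s1a = live s \<and> amap s \<subseteq>\<^sub>m amap s1a
    \<and> card (dom (amap s1a)) = card (dom (amap s)) + length d1 \<and> length d1 \<le> 1 \<and> c1 \<le> 3 * mapc s
    \<and> (\<forall>Ow L. Iown k (amap s) Ow L \<longrightarrow> Iown k (amap s1a) (dfold d1 Ow) L)
    \<and> (\<forall>ad\<in>set d1. \<exists>p\<in>dom (amap s). p < 2^k \<and> fst ad = the (amap s p))"
    by (rule key_step[OF W0 _ e1]) (use r in auto)
  then have W1: "Wf k (amap s1a) (cnt s1a)" by blast
  obtain s1 d2 c2 where e2: "insert_key s1a (hi r) = (s1, d2, c2)" by (metis prod_cases3)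
  have K2: "Wf k (amap s1) (cnt s1) \<and> owner s1 = owner s1a \<and> live s1 = live s1a \<and> amap s1a \<subseteq>\<^sub>m amap s1
    \<and> card (dom (amap s1)) = card (dom (amap s1a)) + length d2 \<and> length d2 \<le> 1 \<and> c2 \<le> 3 * mapc s1a
    \<and> (\<forall>Ow L. Iown k (amap s1a) Ow L \<longrightarrow> Iown k (amap s1) (dfold d2 Ow) L)
    \<and> (\<forall>ad\<in>set d2. \<exists>p\<in>dom (amap s1a). p < 2^k \<and> fst ad = the (amap s1a p))"
    by (rule key_step[OF W1 r(2) e2])
  have ca: "create_atoms r s = (s1, d1 @ d2, c1 + c2)" unfolding create_atoms_def using e1 e2 by simp
  define s2 where "s2 = fst (run_steps apply_delta (d1 @ d2) s1)"
  define La where "La = atom_list k s2 r"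
  define s3 where "s3 = fst (run_steps (ins_atom r) La s2)"
  define sf where "sf = s3\<lparr>live := live s3 \<union> {r}\<rparr>"
  have IR: "insert_rule k r s = (sf, c1 + c2 + snd (run_steps apply_delta (d1 @ d2) s1) + enumc k s2 r
       + snd (run_steps (ins_atom r) La s2))"
    unfolding insert_rule_def ca s2_def La_def s3_def sf_def by (simp split: prod.splits)
  let ?m0 = "amap s" let ?m1 = "amap s1a" let ?m2 = "amap s1"
  have DR: "amap s2 = ?m2" "live s2 = live s" "cnt s2 = cnt s1" "owner s2 = dfold d2 (dfold d1 (owner s))"
    using delta_run[of "d1 @ d2" s1] K1 K2 unfolding s2_def by (auto simp: dfold_append)
  have W2: "Wf k ?m2 (cnt s1)" using K2 by blast
  have f0: "finite (dom ?m0)" "finite (dom ?m1)" "finite (dom ?m2)"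
    using Wf_finite[OF W0] Wf_finite[OF W1] Wf_finite[OF W2] by auto
  have sub01: "dom ?m0 \<subseteq> dom ?m1" and sub12: "dom ?m1 \<subseteq> dom ?m2"
    using K1 K2 map_le_implies_dom_le by blast+
  have I1: "Iown k ?m1 (dfold d1 (owner s)) (live s)" using K1 I0 by blast
  have I2: "Iown k ?m2 (owner s2) (live s)" using K2 I1 DR by auto
  have W2': "Wf k (amap s2) (cnt s1)" using W2 DR by simp
  have ALF: "set La = (\<lambda>n. the (amap s2 n)) ` atom_keys k s2 r \<and> length La \<le> num_atoms k s2"
    unfolding La_def by (rule atom_list_facts[OF W2'])
  have H0: "\<forall>a\<in>set La. finite (owner s2 a (source r)) \<and> card (owner s2 a (source r) \<union> {r}) \<le> card (live s \<union> {r})"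
  proof
    fix a assume "a \<in> set La"
    then obtain n where n: "n \<in> atom_keys k s2 r" "a = the (amap s2 n)" using ALF by auto
    have nd: "n \<in> dom ?m2" "n < 2^k" using n DR unfolding atom_keys_def by auto
    have "owner s2 (the (?m2 n)) (source r) \<subseteq> {r' \<in> live s. source r' = source r \<and> cov ?m2 r' n}"
      using I2 nd unfolding Iown_def by blast
    then have S: "owner s2 a (source r) \<subseteq> live s" using n DR by auto
    have f: "finite (owner s2 a (source r))" by (rule finite_subset[OF S finL])
    have "card (owner s2 a (source r) \<union> {r}) \<le> card (live s \<union> {r})"
      by (rule card_mono) (use finL S in auto)
    then show "finite (owner s2 a (source r)) \<and> card (owner s2 a (source r) \<union> {r}) \<le> card (live s \<union> {r})"
      using f by simp
  qed
  have IRs: "amap s3 = amap s2 \<and> live s3 = live s2 \<and> cnt s3 = cnt s2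
    \<and> owner s3 = (\<lambda>a x. if a \<in> set La \<and> x = source r then owner s2 a x \<union> {r} else owner s2 a x)"
    using ins_run[OF H0] unfolding s3_def by blast
  have sf: "amap sf = ?m2" "live sf = live s \<union> {r}" "cnt sf = cnt s1"
    "owner sf = (\<lambda>a x. if a \<in> set La \<and> x = source r then owner s2 a x \<union> {r} else owner s2 a x)"
    using IRs DR unfolding sf_def by auto
  have finf: "finite (live sf)" using sf finL by simp
  have oM': "overlap k sf \<le> M" using oM IR by simp
  have kf': "num_atoms k sf \<le> Kf" using kf IR by simp
  have Isf: "Iown k ?m2 (owner sf) (live s \<union> {r})"
    unfolding Iown_def
  proof (intro ballI impI allI)
    fix n x assume n: "n \<in> dom ?m2" "n < 2^k"
    have base: "owner s2 (the (?m2 n)) x \<subseteq> {r' \<in> live s. source r' = x \<and> cov ?m2 r' n}"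
      using I2 n unfolding Iown_def by blast
    show "owner sf (the (?m2 n)) x \<subseteq> {r' \<in> live s \<union> {r}. source r' = x \<and> cov ?m2 r' n}"
    proof (cases "the (?m2 n) \<in> set La \<and> x = source r")
      case True
      then obtain n' where n': "n' \<in> atom_keys k s2 r" "the (?m2 n) = the (?m2 n')" using ALF DR by auto
      have "n' \<in> dom ?m2" using n' DR unfolding atom_keys_def by auto
      then have "n = n'" using W2 n n'(2) unfolding Wf_def inj_on_def by blast
      then have "cov ?m2 r n" using n' DR unfolding atom_keys_eq by auto
      then show ?thesis using True base sf by auto
    next
      case False
      then show ?thesis using base sf by auto
    qed
  qed
  have Inv_sf: "Inv k sf" unfolding Inv_def using W2 Isf sf finL by simp
  have na0: "num_atoms k s = card (dom ?m0) - 1" by (rule num_atoms_eq[OF W0])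
  have naf: "num_atoms k sf = card (dom ?m2) - 1" using num_atoms_eq[of k sf "cnt s1"] W2 sf by simp
  have na2: "num_atoms k s2 = num_atoms k sf" unfolding num_atoms_def using sf DR by simp
  have c01: "card (dom ?m0) \<le> card (dom ?m1)" "card (dom ?m1) \<le> card (dom ?m2)"
    using card_mono[OF f0(2) sub01] card_mono[OF f0(3) sub12] by auto
  have g0: "card (dom ?m0) \<ge> 1" by (rule card_dom_ge[OF W0])
  have two: "card (dom ?m2) \<ge> 2"
  proof -
    have "{0, 2^k} \<subseteq> dom ?m2" using W2 unfolding Wf_def by auto
    moreover have "card {0::nat, 2^k} = 2" by simp
    ultimately show ?thesis using card_mono[OF f0(3), of "{0, 2^k}"] by linarith
  qed
  have Kf1: "real Kf \<ge> 1" using kf' naf two by simp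
  have delta_len: "real (length (d1 @ d2)) = real (num_atoms k sf) - real (num_atoms k s)"
  proof -
    have e1: "card (dom ?m1) = card (dom ?m0) + length d1" using K1 by blast
    have e2: "card (dom ?m2) = card (dom ?m1) + length d2" using K2 by blast
    have "card (dom ?m2) = card (dom ?m0) + length d1 + length d2" using e1 e2 by simp
    then have "num_atoms k sf = num_atoms k s + length (d1 @ d2)" using na0 naf g0 by simp
    then show ?thesis by simp
  qed
  have mon: "num_atoms k s \<le> num_atoms k sf" using na0 naf c01 by simp
  have cm2: "card (dom ?m2) \<le> Kf + 1" using naf kf' two by simp
  have mc0: "mapc s \<le> 1 + real Kf" by (rule mapc_le) (use c01 cm2 g0 in auto)
  have mc1: "mapc s1a \<le> 1 + real Kf" by (rule mapc_le) (use c01 cm2 g0 in auto)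
  have mc2: "mapc s2 \<le> 1 + real Kf" by (rule mapc_le) (use c01 cm2 g0 DR in auto)
  have cc1: "c1 \<le> 3 * mapc s" using K1 by blast
  have cc2: "c2 \<le> 3 * mapc s1a" using K2 by blast
  have C1: "c1 + c2 \<le> 6 * (1 + real Kf)"
  proof -
    have "3 * mapc s \<le> 3 * (1 + real Kf)" using mc0 by simp
    moreover have "3 * mapc s1a \<le> 3 * (1 + real Kf)" using mc1 by simp
    ultimately show ?thesis using cc1 cc2 by simp
  qed
  have lenLa: "real (length La) \<le> real Kf" using ALF na2 kf' by simp
  have E: "enumc k s2 r \<le> 1 + 2 * real Kf" unfolding enumc_def using mc2 lenLa La_def by simp
  have H1: "\<forall>a\<in>set La. finite (owner s2 a (source r)) \<and> card (owner s2 a (source r) \<union> {r}) \<le> M"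
  proof
    fix a assume "a \<in> set La"
    then obtain n where n: "n \<in> atom_keys k s2 r" "a = the (amap s2 n)" using ALF by auto
    have nd: "n \<in> dom ?m2" "n < 2^k" "cov ?m2 r n" using n DR unfolding atom_keys_eq by auto
    have "owner s2 (the (?m2 n)) (source r) \<subseteq> {r' \<in> live s. source r' = source r \<and> cov ?m2 r' n}"
      using I2 nd unfolding Iown_def by blast
    then have S: "owner s2 a (source r) \<union> {r} \<subseteq> {r' \<in> live s \<union> {r}. source r' = source r \<and> cov ?m2 r' n}"
      using n DR nd(3) by auto
    have "card (owner s2 a (source r) \<union> {r}) \<le> card {r' \<in> live s \<union> {r}. source r' = source r \<and> cov ?m2 r' n}"
      by (rule card_mono[OF _ S]) (use finL in simp)
    also have "\<dots> \<le> overlap k sf"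
      using card_cov_le[OF finf, of "live s \<union> {r}" n k "source r"] sf nd by simp
    finally show "finite (owner s2 a (source r)) \<and> card (owner s2 a (source r) \<union> {r}) \<le> M"
      using H0 \<open>a \<in> set La\<close> oM' by auto
  qed
  have F: "snd (run_steps (ins_atom r) La s2) \<le> real (length La) * (5 + 2 * log 2 (real M + 1))"
    using ins_run[OF H1] by blast
  have lM: "log 2 (real M + 1) \<le> 1 + log 2 (real M)" "1 \<le> 1 + log 2 (real M)" using logM by auto
  have cN': "card (live s) \<le> N" by (rule cN)
  have D1: "snd (run_steps apply_delta d1 s1) \<le> real (length d1) * (1 + real N * (4 + log 2 (real M + 1)))"
  proof (rule delta1[OF _ finL cN])
    show "length d1 \<le> 1" using K1 by blast
    show "\<forall>ad\<in>set d1. \<forall>x. owner s1 (fst ad) x \<subseteq> {r \<in> live s. source r = x} \<and> card (owner s1 (fst ad) x) \<le> M"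
    proof
      fix ad assume "ad \<in> set d1"
      then obtain p where p: "p \<in> dom ?m0" "p < 2^k" "fst ad = the (?m0 p)" using K1 by blast
      have "\<forall>x. owner s (the (?m0 p)) x \<subseteq> {r \<in> live s. source r = x} \<and> card (owner s (the (?m0 p)) x) \<le> overlap k sf"
        by (rule owner_bound[OF I0 W0 _ _ p(1,2) finf]) (use sub01 sub12 sf f0 in auto)
      then show "\<forall>x. owner s1 (fst ad) x \<subseteq> {r \<in> live s. source r = x} \<and> card (owner s1 (fst ad) x) \<le> M"
        using p K1 K2 oM' by (metis le_trans)
    qed
  qed
  let ?t1 = "fst (run_steps apply_delta d1 s1)"
  have os1: "owner s1 = owner s" using K1 K2 by auto
  have t1o: "owner ?t1 = dfold d1 (owner s)" using delta_run[of d1 s1] os1 by simp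
  have D2: "snd (run_steps apply_delta d2 ?t1) \<le> real (length d2) * (1 + real N * (4 + log 2 (real M + 1)))"
  proof (rule delta1[OF _ finL cN])
    show "length d2 \<le> 1" using K2 by blast
    show "\<forall>ad\<in>set d2. \<forall>x. owner ?t1 (fst ad) x \<subseteq> {r \<in> live s. source r = x} \<and> card (owner ?t1 (fst ad) x) \<le> M"
    proof
      fix ad assume "ad \<in> set d2"
      then obtain p where p: "p \<in> dom ?m1" "p < 2^k" "fst ad = the (?m1 p)" using K2 by blast
      have "\<forall>x. dfold d1 (owner s) (the (?m1 p)) x \<subseteq> {r \<in> live s. source r = x} \<and> card (dfold d1 (owner s) (the (?m1 p)) x) \<le> overlap k sf"
        by (rule owner_bound[OF I1 W1 _ _ p(1,2) finf]) (use sub12 sf f0 in auto)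
      then show "\<forall>x. owner ?t1 (fst ad) x \<subseteq> {r \<in> live s. source r = x} \<and> card (owner ?t1 (fst ad) x) \<le> M"
        using p t1o oM' by (metis le_trans)
    qed
  qed
  have D: "snd (run_steps apply_delta (d1 @ d2) s1) \<le> real (length (d1 @ d2)) * (1 + real N * (4 + log 2 (real M + 1)))"
    using run_steps_append[of apply_delta d1 d2 s1] D1 D2 by (simp add: algebra_simps)
  define Lm where "Lm = 1 + log 2 (real M)"
  define l where "l = log 2 (real M + 1)"
  have l0: "0 \<le> l" unfolding l_def by simp
  have lL: "l \<le> Lm" "1 \<le> Lm" using lM unfolding Lm_def l_def by auto
  have dl0: "0 \<le> real (length (d1 @ d2))" by simp
  have a1: "real N * (4 + l) \<le> 5 * real N * Lm"
  proof -
    have "4 + l \<le> 5 * Lm" using lL by linarith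
    then show ?thesis by (metis mult.assoc mult.commute mult_left_mono of_nat_0_le_iff)
  qed
  have a2: "real (length (d1 @ d2)) * (1 + real N * (4 + l)) \<le> real (length (d1 @ d2)) * (1 + 5 * real N * Lm)"
    by (rule mult_left_mono) (use a1 in auto)
  have a3: "real Kf * (5 + 2 * l) \<le> real Kf * (5 + 2 * Lm)" by (rule mult_left_mono) (use lL Kf1 in auto)
  have a4: "real Kf \<le> real Kf * Lm" using lL Kf1 by (metis mult.right_neutral mult_left_mono of_nat_0_le_iff)
  have F2: "snd (run_steps (ins_atom r) La s2) \<le> real Kf * (5 + 2 * l)"
  proof -
    have "real (length La) * (5 + 2 * l) \<le> real Kf * (5 + 2 * l)" by (rule mult_right_mono) (use lenLa l0 in auto)
    then show ?thesis using F unfolding l_def by linarith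
  qed
  have tot: "snd (insert_rule k r s) \<le> 22 * real Kf * Lm + (real (num_atoms k sf) - real (num_atoms k s)) * (1 + 5 * real N * Lm)"
  proof -
    have "snd (insert_rule k r s) = c1 + c2 + snd (run_steps apply_delta (d1 @ d2) s1) + enumc k s2 r
       + snd (run_steps (ins_atom r) La s2)" using IR by simp
    also have "\<dots> \<le> 6 * (1 + real Kf) + real (length (d1 @ d2)) * (1 + 5 * real N * Lm) + (1 + 2 * real Kf) + real Kf * (5 + 2 * Lm)"
      using C1 D a2 E F2 a3 unfolding l_def by linarith
    also have "\<dots> \<le> 22 * real Kf * Lm + real (length (d1 @ d2)) * (1 + 5 * real N * Lm)"
    proof -
      have q1: "real Kf * (5 + 2 * Lm) = 5 * real Kf + 2 * (real Kf * Lm)" by (simp add: algebra_simps)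
      have q2: "22 * real Kf * Lm = 22 * (real Kf * Lm)" by simp
      show ?thesis unfolding q1 q2 by (rule aux22[OF a4 Kf1])
    qed
    finally show ?thesis using delta_len by simp
  qed
  show ?thesis using IR Inv_sf sf mon tot unfolding Lm_def by simp
qed

lemma aux12:
  fixes K P X :: real
  assumes "K \<le> P" "1 \<le> K" "X \<le> K * 6 + 3 * P"
  shows "1 + K + K + X \<le> 22 * P"
  using assms by (simp add: algebra_simps)

lemma remove_step:
  fixes s :: "'v st"
  assumes Iv: "Inv k s" and oM: "overlap k s \<le> M"
    and kf: "num_atoms k (fst (remove_rule k r s)) \<le> Kf"
  shows "Inv k (fst (remove_rule k r s)) \<and> live (fst (remove_rule k r s)) = live s - {r}
     \<and> num_atoms k s \<le> num_atoms k (fst (remove_rule k r s))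
     \<and> snd (remove_rule k r s) \<le> 22 * real Kf * (1 + log 2 (real M))
         + (real (num_atoms k (fst (remove_rule k r s))) - real (num_atoms k s)) * (1 + 5 * real N * (1 + log 2 (real M)))"
proof -
  from Iv have W0: "Wf k (amap s) (cnt s)" and finL: "finite (live s)" and I0: "Iown k (amap s) (owner s) (live s)"
    unfolding Inv_def by auto
  define La where "La = atom_list k s r"
  define s3 where "s3 = fst (run_steps (rem_atom r) La s)"
  define sf where "sf = s3\<lparr>live := live s3 - {r}\<rparr>"
  have RR: "remove_rule k r s = (sf, enumc k s r + snd (run_steps (rem_atom r) La s))"
    unfolding remove_rule_def La_def s3_def sf_def by (simp split: prod.splits)
  let ?m = "amap s"
  have ALF: "set La = (\<lambda>n. the (?m n)) ` atom_keys k s r \<and> length La \<le> num_atoms k s"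
    unfolding La_def by (rule atom_list_facts[OF W0])
  have H: "\<forall>a\<in>set La. finite (owner s a (source r)) \<and> card (owner s a (source r)) \<le> M"
  proof
    fix a assume "a \<in> set La"
    then obtain n where n: "n \<in> atom_keys k s r" "a = the (?m n)" using ALF by auto
    have nd: "n \<in> dom ?m" "n < 2^k" using n unfolding atom_keys_def by auto
    have S: "owner s a (source r) \<subseteq> {r' \<in> live s. source r' = source r \<and> cov ?m r' n}"
      using I0 nd n unfolding Iown_def by blast
    have f: "finite {r' \<in> live s. source r' = source r \<and> cov ?m r' n}" using finL by simp
    have "card (owner s a (source r)) \<le> card {r' \<in> live s. source r' = source r \<and> cov ?m r' n}"
      by (rule card_mono[OF f S])
    also have "\<dots> \<le> overlap k s" by (rule card_cov_le[OF finL _ nd]) simp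
    finally show "finite (owner s a (source r)) \<and> card (owner s a (source r)) \<le> M"
      using finite_subset[OF S f] oM by simp
  qed
  have RRs: "amap s3 = ?m \<and> live s3 = live s \<and> cnt s3 = cnt s
    \<and> owner s3 = (\<lambda>a x. if a \<in> set La \<and> x = source r then owner s a x - {r} else owner s a x)
    \<and> snd (run_steps (rem_atom r) La s) \<le> real (length La) * (6 + 3 * log 2 (real M + 1))"
    using rem_run[OF H] unfolding s3_def by blast
  have sf: "amap sf = ?m" "live sf = live s - {r}" "cnt sf = cnt s"
    "owner sf = (\<lambda>a x. if a \<in> set La \<and> x = source r then owner s a x - {r} else owner s a x)"
    using RRs unfolding sf_def by auto
  have Isf: "Iown k ?m (owner sf) (live s - {r})"
    unfolding Iown_def
  proof (intro ballI impI allI)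
    fix n x assume n: "n \<in> dom ?m" "n < 2^k"
    have base: "owner s (the (?m n)) x \<subseteq> {r' \<in> live s. source r' = x \<and> cov ?m r' n}"
      using I0 n unfolding Iown_def by blast
    show "owner sf (the (?m n)) x \<subseteq> {r' \<in> live s - {r}. source r' = x \<and> cov ?m r' n}"
    proof (cases "the (?m n) \<in> set La \<and> x = source r")
      case True
      then show ?thesis using base sf by auto
    next
      case False
      have "r \<notin> owner s (the (?m n)) x"
      proof
        assume "r \<in> owner s (the (?m n)) x"
        then have "x = source r" "cov ?m r n" using base by auto
        then have "n \<in> atom_keys k s r" using n unfolding atom_keys_eq by auto
        then have "the (?m n) \<in> set La" using ALF by auto
        then show False using False \<open>x = source r\<close> by simp
      qed
      then show ?thesis using base sf False by auto
    qed
  qed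
  have Inv_sf: "Inv k sf" unfolding Inv_def using W0 Isf sf finL by simp
  have na: "num_atoms k sf = num_atoms k s" unfolding num_atoms_def using sf by simp
  have naf: "num_atoms k s = card (dom ?m) - 1" by (rule num_atoms_eq[OF W0])
  have two: "card (dom ?m) \<ge> 2"
  proof -
    have "{0, 2^k} \<subseteq> dom ?m" using W0 unfolding Wf_def by auto
    moreover have "card {0::nat, 2^k} = 2" by simp
    ultimately show ?thesis using card_mono[OF Wf_finite[OF W0], of "{0, 2^k}"] by linarith
  qed
  have kf': "num_atoms k s \<le> Kf" using kf RR na by simp
  have Kf1: "real Kf \<ge> 1" using kf' naf two by simp
  have mc: "mapc s \<le> 1 + real Kf" by (rule mapc_le) (use naf kf' two in auto)
  have lenLa: "real (length La) \<le> real Kf" using ALF kf' by simp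
  define Lm where "Lm = 1 + log 2 (real M)"
  define l where "l = log 2 (real M + 1)"
  have lM: "log 2 (real M + 1) \<le> 1 + log 2 (real M)" "1 \<le> 1 + log 2 (real M)" using logM by auto
  have l0: "0 \<le> l" unfolding l_def by simp
  have lL: "l \<le> Lm" "1 \<le> Lm" using lM unfolding Lm_def l_def by auto
  have a4: "real Kf \<le> real Kf * Lm" using lL Kf1 by (metis mult.right_neutral mult_left_mono of_nat_0_le_iff)
  have F: "snd (run_steps (rem_atom r) La s) \<le> real Kf * 6 + 3 * (real Kf * Lm)"
  proof -
    have "real (length La) * (6 + 3 * l) \<le> real Kf * (6 + 3 * l)" by (rule mult_right_mono) (use lenLa l0 in auto)
    also have "\<dots> \<le> real Kf * (6 + 3 * Lm)" by (rule mult_left_mono) (use lL in auto)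
    also have "\<dots> = real Kf * 6 + 3 * (real Kf * Lm)" by (simp add: algebra_simps)
    finally show ?thesis using RRs unfolding l_def by linarith
  qed
  have E: "enumc k s r \<le> 1 + real Kf + real Kf" unfolding enumc_def using mc lenLa La_def by simp
  have tot: "snd (remove_rule k r s) \<le> 22 * (real Kf * Lm)"
  proof -
    have "snd (remove_rule k r s) = enumc k s r + snd (run_steps (rem_atom r) La s)" using RR by simp
    also have "\<dots> \<le> 1 + real Kf + real Kf + snd (run_steps (rem_atom r) La s)" using E by simp
    also have "\<dots> \<le> 22 * (real Kf * Lm)" by (rule aux12[OF a4 Kf1 F])
    finally show ?thesis .
  qed
  show ?thesis using RR Inv_sf sf na tot unfolding Lm_def by (simp add: mult.assoc)
qed

lemma op_step:
  fixes s :: "'v st"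
  assumes Iv: "Inv k s" and v: "valid_op k E s p" and cN: "card (live s) \<le> N"
    and oM: "overlap k (fst (exec_op k p s)) \<le> M" "overlap k s \<le> M"
    and kf: "num_atoms k (fst (exec_op k p s)) \<le> Kf"
  shows "Inv k (fst (exec_op k p s)) \<and> card (live (fst (exec_op k p s))) \<le> card (live s) + 1
     \<and> num_atoms k s \<le> num_atoms k (fst (exec_op k p s))
     \<and> snd (exec_op k p s) \<le> 22 * real Kf * (1 + log 2 (real M))
         + (real (num_atoms k (fst (exec_op k p s))) - real (num_atoms k s)) * (1 + 5 * real N * (1 + log 2 (real M)))"
proof (cases p)
  case (Ins r)
  have r: "lo r < hi r" "hi r \<le> 2^k" using v Ins unfolding valid_op_def by auto
  have fin: "finite (live s)" using Iv unfolding Inv_def by blast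
  have X: "Inv k (fst (insert_rule k r s)) \<and> live (fst (insert_rule k r s)) = live s \<union> {r}
     \<and> num_atoms k s \<le> num_atoms k (fst (insert_rule k r s))
     \<and> snd (insert_rule k r s) \<le> 22 * real Kf * (1 + log 2 (real M))
         + (real (num_atoms k (fst (insert_rule k r s))) - real (num_atoms k s)) * (1 + 5 * real N * (1 + log 2 (real M)))"
    by (rule insert_step[OF Iv r cN]) (use oM kf Ins in \<open>auto simp: exec_op_def\<close>)
  have "card (live s \<union> {r}) \<le> card (live s) + 1" using fin by (simp add: card_insert_le_m1 card_insert_if)
  then show ?thesis using X Ins by (simp add: exec_op_def)
next
  case (Rem r)
  have fin: "finite (live s)" using Iv unfolding Inv_def by blast
  have X: "Inv k (fst (remove_rule k r s)) \<and> live (fst (remove_rule k r s)) = live s - {r}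
     \<and> num_atoms k s \<le> num_atoms k (fst (remove_rule k r s))
     \<and> snd (remove_rule k r s) \<le> 22 * real Kf * (1 + log 2 (real M))
         + (real (num_atoms k (fst (remove_rule k r s))) - real (num_atoms k s)) * (1 + 5 * real N * (1 + log 2 (real M)))"
    by (rule remove_step[OF Iv oM(2)]) (use kf Rem in \<open>auto simp: exec_op_def\<close>)
  have "card (live s - {r}) \<le> card (live s) + 1" using fin by (meson card_Diff1_le le_add1 le_trans)
  then show ?thesis using X Rem by (simp add: exec_op_def)
qed

lemma states_hd: "s \<in> set (states k os s)"
  by (cases os) auto

lemma main_lemma:
  fixes s :: "'v st"
  assumes "Inv k s" "valid_seq k E os s" "card (live s) + length os \<le> N"
    "\<forall>t\<in>set (states k os s). overlap k t \<le> M"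
    "num_atoms k (fst (run_steps (exec_op k) os s)) \<le> Kf"
  shows "num_atoms k s \<le> num_atoms k (fst (run_steps (exec_op k) os s)) \<and>
    snd (run_steps (exec_op k) os s) \<le> real (length os) * (22 * real Kf * (1 + log 2 (real M)))
      + (real (num_atoms k (fst (run_steps (exec_op k) os s))) - real (num_atoms k s)) * (1 + 5 * real N * (1 + log 2 (real M)))"
  using assms
proof (induction os arbitrary: s)
  case Nil then show ?case by simp
next
  case (Cons p os)
  let ?s' = "fst (exec_op k p s)"
  let ?f = "fst (run_steps (exec_op k) os ?s')"
  have RC: "fst (run_steps (exec_op k) (p # os) s) = ?f"
    "snd (run_steps (exec_op k) (p # os) s) = snd (exec_op k p s) + snd (run_steps (exec_op k) os ?s')"
    using run_steps_cons[of "exec_op k" p os s] by simp_all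
  have v: "valid_op k E s p" "valid_seq k E os ?s'" using Cons.prems(2) by auto
  have cN: "card (live s) \<le> N" using Cons.prems(3) by simp
  have o1: "overlap k s \<le> M" using Cons.prems(4) by simp
  have o2: "overlap k ?s' \<le> M" using Cons.prems(4) states_hd[of ?s' k os] by simp
  have O0: "Inv k ?s' \<and> card (live ?s') \<le> card (live s) + 1"
    using op_step[OF Cons.prems(1) v(1) cN o2 o1, of "num_atoms k ?s'"] by simp
  have IH: "num_atoms k ?s' \<le> num_atoms k ?f \<and>
    snd (run_steps (exec_op k) os ?s') \<le> real (length os) * (22 * real Kf * (1 + log 2 (real M)))
      + (real (num_atoms k ?f) - real (num_atoms k ?s')) * (1 + 5 * real N * (1 + log 2 (real M)))"
  proof (rule Cons.IH)
    show "Inv k ?s'" using O0 by blast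
    show "valid_seq k E os ?s'" by (rule v(2))
    show "card (live ?s') + length os \<le> N" using O0 Cons.prems(3) by simp
    show "\<forall>t\<in>set (states k os ?s'). overlap k t \<le> M" using Cons.prems(4) by simp
    show "num_atoms k ?f \<le> Kf" using Cons.prems(5) RC by simp
  qed
  have kf: "num_atoms k ?s' \<le> Kf" using IH Cons.prems(5) RC by simp
  note O1 = op_step[OF Cons.prems(1) v(1) cN o2 o1 kf]
  define P where "P = 22 * real Kf * (1 + log 2 (real M))"
  define B where "B = 1 + 5 * real N * (1 + log 2 (real M))"
  have c1: "snd (exec_op k p s) \<le> P + (real (num_atoms k ?s') - real (num_atoms k s)) * B"
    using O1 unfolding P_def B_def by blast
  have c2: "snd (run_steps (exec_op k) os ?s') \<le> real (length os) * P + (real (num_atoms k ?f) - real (num_atoms k ?s')) * B"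
    using IH unfolding P_def B_def by blast
  have eq: "real (length (p # os)) * P + (real (num_atoms k ?f) - real (num_atoms k s)) * B
     = (P + (real (num_atoms k ?s') - real (num_atoms k s)) * B) + (real (length os) * P + (real (num_atoms k ?f) - real (num_atoms k ?s')) * B)"
    by (simp add: algebra_simps)
  have "snd (run_steps (exec_op k) (p # os) s) \<le> real (length (p # os)) * P + (real (num_atoms k ?f) - real (num_atoms k s)) * B"
    unfolding eq RC using c1 c2 by linarith
  moreover have "num_atoms k s \<le> num_atoms k ?f" using O1 IH by linarith
  ultimately show ?case using RC unfolding P_def B_def by simp
qed

lemma Inv_init: "Inv k (init k)"
proof -
  have ne: "(0::nat) \<noteq> 2^k" by simp
  have W: "Wf k (amap (init k)) (cnt (init k))"
    unfolding Wf_def init_def using ne by (auto simp: inj_on_def)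
  show ?thesis unfolding Inv_def Iown_def using W by (simp add: init_def)
qed

theorem theorem1:
  "\<exists>C :: real. C > 0 \<and>
     (\<forall>(k :: nat) (E :: ('v \<times> 'v) set) (os :: 'v oper list).
        valid_seq k E os (init k) \<longrightarrow>
        total_cost k os \<le> C * real (length os) * real (num_atoms k (final_state k os))
                            * (1 + log 2 (real (max_overlap k os))))"
proof (intro exI[of _ 28] conjI allI impI)
  show "(0::real) < 28" by simp
  fix k :: nat and E :: "('v \<times> 'v) set" and os :: "'v oper list"
  assume v: "valid_seq k E os (init k)"
  define M where "M = max_overlap k os"
  define Kf where "Kf = num_atoms k (final_state k os)"
  define R where "R = length os"
  define Lm where "Lm = 1 + log 2 (real M)"
  have oM: "\<forall>t\<in>set (states k os (init k)). overlap k t \<le> M"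
    unfolding M_def max_overlap_def by simp
  have cl: "card (live (init k :: 'v st)) + length os \<le> R" by (simp add: R_def init_def)
  have kl: "num_atoms k (fst (run_steps (exec_op k) os (init k :: 'v st))) \<le> Kf" by (simp add: Kf_def final_state_def)
  note Mn = main_lemma[OF Inv_init v cl oM kl]
  have fk: "num_atoms k (fst (run_steps (exec_op k) os (init k :: 'v st))) = Kf" by (simp add: Kf_def final_state_def)
  have tc: "total_cost k os = snd (run_steps (exec_op k) os (init k :: 'v st))" by (simp add: total_cost_def)
  have Lm1: "1 \<le> Lm" using logM[of M] unfolding Lm_def by auto
  show "total_cost k os \<le> 28 * real (length os) * real (num_atoms k (final_state k os)) * (1 + log 2 (real (max_overlap k os)))"
  proof (cases "R = 0")
    case True
    then have "os = []" unfolding R_def by simp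
    then show ?thesis by (simp add: total_cost_def)
  next
    case False
    then have R1: "1 \<le> real R" by simp
    define Q where "Q = real R * real Kf * Lm"
    have RL: "1 \<le> real R * Lm" using R1 Lm1 by (metis mult_mono' mult_1 zero_le_one)
    have KQ: "real Kf \<le> Q" unfolding Q_def using RL
      by (metis mult.commute mult.left_commute mult_left_mono mult.right_neutral of_nat_0_le_iff)
    have b1: "snd (run_steps (exec_op k) os (init k :: 'v st)) \<le> real R * (22 * real Kf * Lm)
      + (real Kf - real (num_atoms k (init k :: 'v st))) * (1 + 5 * real R * Lm)"
      using Mn fk unfolding R_def Lm_def by simp
    have b2: "(real Kf - real (num_atoms k (init k :: 'v st))) * (1 + 5 * real R * Lm) \<le> real Kf * (1 + 5 * real R * Lm)"
      by (rule mult_right_mono) (use R1 Lm1 in auto)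
    have b3: "real Kf * (1 + 5 * real R * Lm) = real Kf + 5 * Q" unfolding Q_def by (simp add: algebra_simps)
    have b4: "real R * (22 * real Kf * Lm) = 22 * Q" unfolding Q_def by (simp add: algebra_simps)
    have "total_cost k os \<le> 28 * Q" using tc b1 b2 b3 b4 KQ by linarith
    then show ?thesis unfolding Q_def R_def Kf_def Lm_def M_def by (simp add: algebra_simps)
  qed
qed

end
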